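(* Let $g$ be a game on a finite graph and $a$ a player whose preference $\prec_a$ is a strict weak order. Assume that for every history $h$ and every $p\in[H_{g_h}]$, if the first player has a winning strategy in the one-vs-all threshold game $(g_h)^{a,p}$ then she has one with memory size $m$. Then for every $h\in H$ there exists a strategy $s_a$ of $a$ in $g_h$ with memory size $m$ such that $\gamma_a(h,s_a)=\Gamma_a(h)$.
   Context: A game on a finite graph $g=\langle(V,E),v_0,A,\{V_a\}_{a\in A},(\prec_a)_{a\in A}\rangle$: $(V,E)$ is a finite directed graph in which every vertex has an outgoing edge, $v_0$ the start, $\{V_a\}$ a partition of $V$ by owner, and $\prec_a\subseteq[H]\times[H]$, where $H$ is the set of finite paths from $v_0$ and $[H]$ the infinite ones. A strategy of $a$ maps each history ending in $V_a$ to a successor of its last vertex. A strategy has memory size $m$ if it is implemented by a function $\sigma:V\times\{0,1\}^m\to V\times\{0,1\}^m$: memory starts at $0^m$, after visiting vertex $v$ with memory $M$ the memory becomes $\pi_2\sigma(v,M)$, and the move at a history ending in $v$ is $\pi_1\sigma(v,M)$ with $M$ the current memory. For $h\in H$ ending in $v_1$, the future game $g_h$ is the game started at $v_1$ with preferences $v_1p\prec^h_a v_1p'$ iff $hp\prec_a hp'$ ($hp$ is $h$ continued by $v_1p$). The one-vs-all threshold game $g^{a,p}$ (for a game $g$, $a\in A$, $p$ an infinite play of $g$) is the two-player win/lose game on the same graph and start, where the first player owns $V_a$, the second owns $\bigcup_{b\neq a}V_b$, and the first player wins exactly the plays $p'$ with $p\prec_a p'$. For a strategy $s_a$ of $a$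 in $g_h$: $[H_{g_h}]$ is the set of infinite paths from $v_1$, $[H_{g_h}(s_a)]$ those consistent with $s_a$, $\gamma_a(h,s_a):=\{v_1p\in[H_{g_h}]\mid\exists v_1p'\in[H_{g_h}(s_a)],\ \neg(hp\prec_a hp')\}$ and $\Gamma_a(h):=\bigcap_{s_a}\gamma_a(h,s_a)$. A strict weak order is an irreflexive, transitive relation with $\neg(x\prec y)\wedge\neg(y\prec z)\Rightarrow\neg(x\prec z)$. *)

theory Defs
  imports Main
begin

definition fpath_from :: "('v \<times> 'v) set \<Rightarrow> 'v \<Rightarrow> 'v list \<Rightarrow> bool" where
  "fpath_from E v h \<longleftrightarrow> h \<noteq> [] \<and> hd h = v \<and> (\<forall>i. Suc i < length h \<longrightarrow> (h ! i, h ! Suc i) \<in> E)"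

definition ipath_from :: "('v \<times> 'v) set \<Rightarrow> 'v \<Rightarrow> (nat \<Rightarrow> 'v) \<Rightarrow> bool" where
  "ipath_from E v q \<longleftrightarrow> q 0 = v \<and> (\<forall>n. (q n, q (Suc n)) \<in> E)"

definition pref_upto :: "(nat \<Rightarrow> 'v) \<Rightarrow> nat \<Rightarrow> 'v list" where
  "pref_upto q n = map q [0..<Suc n]"

text \<open>hcat h q = h p where q = v1 p and v1 = last h.\<close>
definition hcat :: "'v list \<Rightarrow> (nat \<Rightarrow> 'v) \<Rightarrow> (nat \<Rightarrow> 'v)" where
  "hcat h q = (\<lambda>n. if n < length h then h ! n else q (n + 1 - length h))"

definition game :: "'v set \<Rightarrow> ('v \<times> 'v) set \<Rightarrow> 'v \<Rightarrow> 'a set \<Rightarrow> ('v \<Rightarrow> 'a)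
    \<Rightarrow> ('a \<Rightarrow> (nat \<Rightarrow> 'v) \<Rightarrow> (nat \<Rightarrow> 'v) \<Rightarrow> bool) \<Rightarrow> bool" where
  "game V E v0 A own prec \<longleftrightarrow> finite V \<and> E \<subseteq> V \<times> V \<and> v0 \<in> V
     \<and> (\<forall>v\<in>V. \<exists>w. (v, w) \<in> E) \<and> own ` V \<subseteq> A
     \<and> (\<forall>b p p'. prec b p p' \<longrightarrow> ipath_from E v0 p \<and> ipath_from E v0 p')"

definition strict_weak_order_on :: "'b set \<Rightarrow> ('b \<Rightarrow> 'b \<Rightarrow> bool) \<Rightarrow> bool" where
  "strict_weak_order_on S r \<longleftrightarrow>
     (\<forall>x\<in>S. \<not> r x x)
   \<and> (\<forall>x\<in>S. \<forall>y\<in>S. \<forall>z\<in>S. r x y \<and> r y z \<longrightarrow> r x z)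
   \<and> (\<forall>x\<in>S. \<forall>y\<in>S. \<forall>z\<in>S. \<not> r x y \<and> \<not> r y z \<longrightarrow> \<not> r x z)"

definition strategy :: "('v \<times> 'v) set \<Rightarrow> ('v \<Rightarrow> 'a) \<Rightarrow> 'a \<Rightarrow> 'v \<Rightarrow> ('v list \<Rightarrow> 'v) \<Rightarrow> bool" where
  "strategy E own a v s \<longleftrightarrow>
     (\<forall>h. fpath_from E v h \<and> own (last h) = a \<longrightarrow> (last h, s h) \<in> E)"

definition consistent :: "('v \<times> 'v) set \<Rightarrow> ('v \<Rightarrow> 'a) \<Rightarrow> 'a \<Rightarrow> 'v \<Rightarrow> ('v list \<Rightarrow> 'v) \<Rightarrow> (nat \<Rightarrow> 'v) \<Rightarrow> bool" where
  "consistent E own a v s q \<longleftrightarrow> ipath_from E v q \<and>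
     (\<forall>n. own (q n) = a \<longrightarrow> q (Suc n) = s (pref_upto q n))"

definition mem_after :: "('v \<Rightarrow> bool list \<Rightarrow> 'v \<times> bool list) \<Rightarrow> bool list \<Rightarrow> 'v list \<Rightarrow> bool list" where
  "mem_after \<sigma> M0 xs = foldl (\<lambda>M v. snd (\<sigma> v M)) M0 xs"

definition memory_size :: "('v \<times> 'v) set \<Rightarrow> ('v \<Rightarrow> 'a) \<Rightarrow> 'a \<Rightarrow> 'v \<Rightarrow> nat \<Rightarrow> ('v list \<Rightarrow> 'v) \<Rightarrow> bool" where
  "memory_size E own a v m s \<longleftrightarrow>
     (\<exists>\<sigma> :: 'v \<Rightarrow> bool list \<Rightarrow> 'v \<times> bool list.
        (\<forall>w M. length M = m \<longrightarrow> length (snd (\<sigma> w M)) = m)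
      \<and> (\<forall>h. fpath_from E v h \<and> own (last h) = a \<longrightarrow>
             s h = fst (\<sigma> (last h) (mem_after \<sigma> (replicate m False) (butlast h)))))"

text \<open>First player wins the one-vs-all threshold game (g_h)^{a,p} with strategy s.\<close>
definition wins_threshold :: "('v \<times> 'v) set \<Rightarrow> ('v \<Rightarrow> 'a) \<Rightarrow> ('a \<Rightarrow> (nat \<Rightarrow> 'v) \<Rightarrow> (nat \<Rightarrow> 'v) \<Rightarrow> bool)
    \<Rightarrow> 'a \<Rightarrow> 'v list \<Rightarrow> (nat \<Rightarrow> 'v) \<Rightarrow> ('v list \<Rightarrow> 'v) \<Rightarrow> bool" where
  "wins_threshold E own prec a h p s \<longleftrightarrow> strategy E own a (last h) s \<and>
     (\<forall>q. consistent E own a (last h) s q \<longrightarrow> prec a (hcat h p) (hcat h q))"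

definition gamma :: "('v \<times> 'v) set \<Rightarrow> ('v \<Rightarrow> 'a) \<Rightarrow> ('a \<Rightarrow> (nat \<Rightarrow> 'v) \<Rightarrow> (nat \<Rightarrow> 'v) \<Rightarrow> bool)
    \<Rightarrow> 'a \<Rightarrow> 'v list \<Rightarrow> ('v list \<Rightarrow> 'v) \<Rightarrow> (nat \<Rightarrow> 'v) set" where
  "gamma E own prec a h s = {p. ipath_from E (last h) p \<and>
     (\<exists>p'. consistent E own a (last h) s p' \<and> \<not> prec a (hcat h p) (hcat h p'))}"

definition Gamma :: "('v \<times> 'v) set \<Rightarrow> ('v \<Rightarrow> 'a) \<Rightarrow> ('a \<Rightarrow> (nat \<Rightarrow> 'v) \<Rightarrow> (nat \<Rightarrow> 'v) \<Rightarrow> bool)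
    \<Rightarrow> 'a \<Rightarrow> 'v list \<Rightarrow> (nat \<Rightarrow> 'v) set" where
  "Gamma E own prec a h = (\<Inter>s \<in> {s. strategy E own a (last h) s}. gamma E own prec a h s)"

end

theory Submission imports Defs begin

definition nrm :: "'v set \<Rightarrow> nat \<Rightarrow> 'v \<Rightarrow> ('v \<Rightarrow> bool list \<Rightarrow> 'v \<times> bool list) \<Rightarrow> 'v \<Rightarrow> bool list \<Rightarrow> 'v \<times> bool list" where
  "nrm V m d \<sigma> w M = (if w \<in> V \<and> length M = m then (if fst (\<sigma> w M) \<in> V then fst (\<sigma> w M) else d, snd (\<sigma> w M)) else (d, replicate m False))"

definition sig :: "nat \<Rightarrow> ('v \<Rightarrow> bool list \<Rightarrow> 'v \<times> bool list) \<Rightarrow> 'v list \<Rightarrow> 'v" where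
  "sig m \<sigma> h = fst (\<sigma> (last h) (mem_after \<sigma> (replicate m False) (butlast h)))"

lemma mem_nrm:
  assumes "\<forall>w M. length M = m \<longrightarrow> length (snd (\<sigma> w M)) = m" "set xs \<subseteq> V" "length M = m"
  shows "mem_after (nrm V m d \<sigma>) M xs = mem_after \<sigma> M xs \<and> length (mem_after \<sigma> M xs) = m"
  using assms(2,3)
proof (induction xs arbitrary: M)
  case Nil then show ?case by (simp add: mem_after_def)
next
  case (Cons x xs)
  have "snd (nrm V m d \<sigma> x M) = snd (\<sigma> x M)" "length (snd (\<sigma> x M)) = m"
    using Cons.prems assms(1) by (auto simp: nrm_def)
  then show ?case using Cons.IH[of "snd (\<sigma> x M)"] Cons.prems by (simp add: mem_after_def)
qed

lemma nrm_len:
  assumes "\<forall>w M. length M = m \<longrightarrow> length (snd (\<sigma> w M)) = m"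
  shows "\<forall>w M. length M = m \<longrightarrow> length (snd (nrm V m d \<sigma> w M)) = m"
  using assms by (auto simp: nrm_def)

lemma finite_nrm:
  assumes "finite V" "d \<in> V"
  shows "finite {nrm V m d \<sigma> | \<sigma>. \<forall>w M. length M = m \<longrightarrow> length (snd (\<sigma> w M)) = m}"
proof -
  let ?A = "V \<times> {M::bool list. length M = m}"
  have fA: "finite ?A" using assms(1) finite_lists_length_eq[of "UNIV::bool set" m] by auto
  let ?S = "{f. \<forall>x. (x \<in> ?A \<longrightarrow> f x \<in> ?A) \<and> (x \<notin> ?A \<longrightarrow> f x = (d, replicate m False))}"
  have "finite ?S" using finite_set_of_finite_funs[OF fA fA] .
  moreover have "{nrm V m d \<sigma> | \<sigma>. \<forall>w M. length M = m \<longrightarrow> length (snd (\<sigma> w M)) = m} \<subseteq> curry ` ?S"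
  proof
    fix x assume "x \<in> {nrm V m d \<sigma> | \<sigma>. \<forall>w M. length M = m \<longrightarrow> length (snd (\<sigma> w M)) = m}"
    then obtain \<sigma> where x: "x = nrm V m d \<sigma>" and l: "\<forall>w M. length M = m \<longrightarrow> length (snd (\<sigma> w M)) = m" by blast
    have "case_prod x \<in> ?S" using l assms(2) by (auto simp: x nrm_def)
    moreover have "x = curry (case_prod x)" by simp
    ultimately show "x \<in> curry ` ?S" by blast
  qed
  ultimately show ?thesis by (rule finite_surj)
qed

lemma fpath_set:
  assumes "fpath_from E v h" "v \<in> V" "E \<subseteq> V \<times> V"
  shows "set h \<subseteq> V"
proof
  fix x assume "x \<in> set h"
  then obtain i where i: "i < length h" "x = h ! i" by (auto simp: in_set_conv_nth)
  show "x \<in> V"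
  proof (cases i)
    case 0 then show ?thesis using assms i by (auto simp: fpath_from_def hd_conv_nth)
  next
    case (Suc j) then have "(h ! j, h ! i) \<in> E" using assms(1) i by (auto simp: fpath_from_def)
    then show ?thesis using assms(3) i by auto
  qed
qed

lemma pref_fpath:
  assumes "ipath_from E v q"
  shows "fpath_from E v (pref_upto q n) \<and> last (pref_upto q n) = q n"
proof -
  have "last (pref_upto q n) = q n" by (simp add: pref_upto_def last_map)
  moreover have "fpath_from E v (pref_upto q n)"
    using assms by (auto simp: fpath_from_def ipath_from_def pref_upto_def hd_map simp del: upt_Suc)
  ultimately show ?thesis by simp
qed

lemma hcat_ipath:
  assumes "fpath_from E v0 h" "ipath_from E (last h) p"
  shows "ipath_from E v0 (hcat h p)"
proof -
  have h0: "h \<noteq> []" "hd h = v0" and he: "\<And>i. Suc i < length h \<Longrightarrow> (h ! i, h ! Suc i) \<in> E"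
    using assms(1) by (auto simp: fpath_from_def)
  have p0: "p 0 = last h" and pe: "\<And>n. (p n, p (Suc n)) \<in> E" using assms(2) by (auto simp: ipath_from_def)
  have "hcat h p 0 = v0" using h0 by (auto simp: hcat_def hd_conv_nth)
  moreover have "(hcat h p n, hcat h p (Suc n)) \<in> E" for n
  proof -
    consider "Suc n < length h" | "Suc n = length h" | "Suc n > length h" by linarith
    then show ?thesis
    proof cases
      case 1 then show ?thesis using he by (simp add: hcat_def)
    next
      case 2
      then have "h ! n = last h" using h0 by (metis diff_Suc_1 last_conv_nth)
      then show ?thesis using 2 pe[of 0] p0 by (simp add: hcat_def)
    next
      case 3
      then have "Suc n + 1 - length h = Suc (n + 1 - length h)" by simp
      then show ?thesis using 3 pe[of "n + 1 - length h"] by (simp add: hcat_def)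
    qed
  qed
  ultimately show ?thesis by (simp add: ipath_from_def)
qed

lemma agree:
  assumes "\<forall>h'. fpath_from E v h' \<and> own (last h') = a \<longrightarrow> s h' = s' h'"
  shows "strategy E own a v s = strategy E own a v s'"
    and "consistent E own a v s q = consistent E own a v s' q"
proof -
  show "strategy E own a v s = strategy E own a v s'"
    using assms by (auto simp: strategy_def)
  show "consistent E own a v s q = consistent E own a v s' q"
    using assms pref_fpath[of E v q] by (auto simp: consistent_def)
qed

lemma agree_wins:
  assumes "\<forall>h'. fpath_from E (last h) h' \<and> own (last h') = a \<longrightarrow> s h' = s' h'"
  shows "wins_threshold E own prec a h p s = wins_threshold E own prec a h p s'"
  using agree[OF assms] by (simp add: wins_threshold_def)

lemma sig_nrm:
  assumes "strategy E own a v s" "v \<in> V" "E \<subseteq> V \<times> V"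
    and l: "\<forall>w M. length M = m \<longrightarrow> length (snd (\<sigma> w M)) = m"
    and ms: "\<forall>h. fpath_from E v h \<and> own (last h) = a \<longrightarrow>
             s h = fst (\<sigma> (last h) (mem_after \<sigma> (replicate m False) (butlast h)))"
  shows "\<forall>h'. fpath_from E v h' \<and> own (last h') = a \<longrightarrow> s h' = sig m (nrm V m d \<sigma>) h'"
proof (intro allI impI)
  fix h' assume H: "fpath_from E v h' \<and> own (last h') = a"
  have sv: "set h' \<subseteq> V" using fpath_set[of E v h' V] H assms(2,3) by auto
  have ne: "h' \<noteq> []" using H by (auto simp: fpath_from_def)
  have lv: "last h' \<in> V" using sv ne by auto
  have "set (butlast h') \<subseteq> V" using sv by (meson in_set_butlastD subset_iff)
  then have mm: "mem_after (nrm V m d \<sigma>) (replicate m False) (butlast h') = mem_after \<sigma> (replicate m False) (butlast h')"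
     "length (mem_after \<sigma> (replicate m False) (butlast h')) = m"
    using mem_nrm[OF l, of "butlast h'" V "replicate m False" d] by auto
  have e: "(last h', s h') \<in> E" using assms(1) H by (auto simp: strategy_def)
  then have "s h' \<in> V" using assms(3) by auto
  then show "s h' = sig m (nrm V m d \<sigma>) h'"
    using ms H mm lv by (auto simp: sig_def nrm_def)
qed

lemma down:
  assumes swo: "strict_weak_order_on {p. ipath_from E v0 p} (prec a)"
    and h: "fpath_from E v0 h" and w: "wins_threshold E own prec a h p s"
    and p: "ipath_from E (last h) p" and p2: "ipath_from E (last h) p''"
    and n: "\<not> prec a (hcat h p) (hcat h p'')"
  shows "wins_threshold E own prec a h p'' s"
  unfolding wins_threshold_def
proof (intro conjI allI impI)
  show "strategy E own a (last h) s" using w by (simp add: wins_threshold_def)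
  fix q assume q: "consistent E own a (last h) s q"
  then have "prec a (hcat h p) (hcat h q)" using w by (simp add: wins_threshold_def)
  moreover have "ipath_from E (last h) q" using q by (simp add: consistent_def)
  then have "ipath_from E v0 (hcat h q)" by (rule hcat_ipath[OF h])
  moreover have "ipath_from E v0 (hcat h p)" "ipath_from E v0 (hcat h p'')" using hcat_ipath[OF h p] hcat_ipath[OF h p2] by auto
  ultimately show "prec a (hcat h p'') (hcat h q)" using swo n unfolding strict_weak_order_on_def by blast
qed

lemma asym:
  assumes swo: "strict_weak_order_on S r" "x \<in> S" "y \<in> S" "r x y"
  shows "\<not> r y x"
  using assms unfolding strict_weak_order_on_def by blast

theorem lemma37:
  fixes V :: "'v set" and E :: "('v \<times> 'v) set" and v0 :: 'v and A :: "'a set"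
    and own :: "'v \<Rightarrow> 'a" and prec :: "'a \<Rightarrow> (nat \<Rightarrow> 'v) \<Rightarrow> (nat \<Rightarrow> 'v) \<Rightarrow> bool"
    and a :: 'a and m :: nat
  assumes "game V E v0 A own prec"
    and "a \<in> A"
    and "strict_weak_order_on {p. ipath_from E v0 p} (prec a)"
    and "\<forall>h p. fpath_from E v0 h \<and> ipath_from E (last h) p \<longrightarrow>
           (\<exists>s. wins_threshold E own prec a h p s) \<longrightarrow>
           (\<exists>s. wins_threshold E own prec a h p s \<and> memory_size E own a (last h) m s)"
  shows "\<forall>h. fpath_from E v0 h \<longrightarrow>
           (\<exists>s. strategy E own a (last h) s \<and> memory_size E own a (last h) m s
                \<and> gamma E own prec a h s = Gamma E own prec a h)"
proof (intro allI impI)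
  fix h assume hh: "fpath_from E v0 h"
  have G: "finite V" "E \<subseteq> V \<times> V" "v0 \<in> V" "\<forall>v\<in>V. \<exists>w. (v, w) \<in> E"
    using assms(1) by (auto simp: game_def)
  define v1 where "v1 = last h"
  have hne: "h \<noteq> []" using hh by (simp add: fpath_from_def)
  have v1V: "v1 \<in> V" using fpath_set[OF hh G(3) G(2)] hne by (auto simp: v1_def)
  define P where "P \<sigma> \<longleftrightarrow> (\<forall>w M. length M = m \<longrightarrow> length (snd (\<sigma> w M)) = m)"
    for \<sigma> :: "'v \<Rightarrow> bool list \<Rightarrow> 'v \<times> bool list"
  define \<Sigma> where "\<Sigma> = {nrm V m v1 \<sigma> | \<sigma>. P \<sigma>}"
  define F where "F = {\<sigma>\<in>\<Sigma>. strategy E own a v1 (sig m \<sigma>)}"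
  define W where "W \<sigma> = {p. ipath_from E v1 p \<and> wins_threshold E own prec a h p (sig m \<sigma>)}" for \<sigma>
  have finF: "finite F" using finite_nrm[OF G(1) v1V, of m] unfolding F_def \<Sigma>_def P_def
    by (rule rev_finite_subset) auto
  have key: "\<exists>\<sigma>\<in>F. \<forall>h'. fpath_from E v1 h' \<and> own (last h') = a \<longrightarrow> s h' = sig m \<sigma> h'"
    if st: "strategy E own a v1 s" and mms: "memory_size E own a v1 m s" for s
  proof -
    obtain \<sigma> where l: "P \<sigma>" and ms: "\<forall>h. fpath_from E v1 h \<and> own (last h) = a \<longrightarrow>
             s h = fst (\<sigma> (last h) (mem_after \<sigma> (replicate m False) (butlast h)))"
      using mms unfolding memory_size_def P_def by blast
    have ag: "\<forall>h'. fpath_from E v1 h' \<and> own (last h') = a \<longrightarrow> s h' = sig m (nrm V m v1 \<sigma>) h'"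
      using sig_nrm[OF st v1V G(2) l[unfolded P_def] ms] .
    have "strategy E own a v1 (sig m (nrm V m v1 \<sigma>))" using agree(1)[OF ag] st by simp
    moreover have "nrm V m v1 \<sigma> \<in> \<Sigma>" using l unfolding \<Sigma>_def by blast
    ultimately have "nrm V m v1 \<sigma> \<in> F" unfolding F_def by blast
    then show ?thesis using ag by blast
  qed
  have memF: "memory_size E own a v1 m (sig m \<sigma>)" if sF: "\<sigma> \<in> F" for \<sigma>
  proof -
    obtain \<tau> where "\<sigma> = nrm V m v1 \<tau>" "P \<tau>" using sF unfolding F_def \<Sigma>_def by blast
    then have "P \<sigma>" using nrm_len unfolding P_def by simp
    then show ?thesis unfolding memory_size_def sig_def P_def by (intro exI[of _ \<sigma>]) simp
  qed
  define \<sigma>z where "\<sigma>z w M = (SOME w'. (w, w') \<in> E, M)" for w and M :: "bool list"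
  have sz: "strategy E own a v1 (sig m \<sigma>z)"
    unfolding strategy_def
  proof (intro allI impI)
    fix h' assume H: "fpath_from E v1 h' \<and> own (last h') = a"
    have "set h' \<subseteq> V" using fpath_set[of E v1 h' V] H v1V G(2) by auto
    moreover have "h' \<noteq> []" using H by (auto simp: fpath_from_def)
    ultimately have "last h' \<in> V" by auto
    then have "\<exists>w. (last h', w) \<in> E" using G(4) by auto
    then show "(last h', sig m \<sigma>z h') \<in> E" unfolding sig_def \<sigma>z_def by (simp add: someI_ex[of "\<lambda>w. (last h', w) \<in> E"])
  qed
  have mz: "memory_size E own a v1 m (sig m \<sigma>z)"
    unfolding memory_size_def sig_def by (rule exI[of _ \<sigma>z]) (simp add: \<sigma>z_def)
  obtain \<sigma>1 where \<sigma>1: "\<sigma>1 \<in> F" using key[OF sz mz] by blast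
  have chain: "W \<sigma>a \<subseteq> W \<sigma>b \<or> W \<sigma>b \<subseteq> W \<sigma>a" for \<sigma>a \<sigma>b
  proof (rule ccontr)
    assume "\<not> ?thesis"
    then obtain p1 p2 where p1: "p1 \<in> W \<sigma>a" "p1 \<notin> W \<sigma>b" and p2: "p2 \<in> W \<sigma>b" "p2 \<notin> W \<sigma>a" by blast
    have i1: "ipath_from E v1 p1" and i2: "ipath_from E v1 p2" using p1 p2 by (auto simp: W_def)
    have j1: "ipath_from E v0 (hcat h p1)" and j2: "ipath_from E v0 (hcat h p2)"
      using hcat_ipath[OF hh] i1 i2 by (auto simp: v1_def)
    have i1': "ipath_from E (last h) p1" and i2': "ipath_from E (last h) p2" using i1 i2 by (simp_all add: v1_def)
    have w1: "wins_threshold E own prec a h p1 (sig m \<sigma>a)" using p1(1) by (simp add: W_def)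
    have w2: "wins_threshold E own prec a h p2 (sig m \<sigma>b)" using p2(1) by (simp add: W_def)
    show False
    proof (cases "prec a (hcat h p1) (hcat h p2)")
      case True
      then have "\<not> prec a (hcat h p2) (hcat h p1)" using asym[OF assms(3)] j1 j2 by auto
      then have "wins_threshold E own prec a h p1 (sig m \<sigma>b)"
        by (rule down[OF assms(3) hh w2 i2' i1'])
      then show False using p1(2) i1 by (simp add: W_def)
    next
      case False
      then have "wins_threshold E own prec a h p2 (sig m \<sigma>a)"
        by (rule down[OF assms(3) hh w1 i1' i2'])
      then show False using p2(2) i2 by (simp add: W_def)
    qed
  qed
  obtain M0 where M0: "M0 \<in> W ` F" "W \<sigma>1 \<subseteq> M0" "\<forall>b\<in>W ` F. M0 \<subseteq> b \<longrightarrow> M0 = b"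
    using finite_has_maximal2[of "W ` F" "W \<sigma>1"] finF \<sigma>1 by auto
  then obtain \<sigma>0 where \<sigma>0: "\<sigma>0 \<in> F" "M0 = W \<sigma>0" by blast
  have maxW: "W \<sigma> \<subseteq> W \<sigma>0" if "\<sigma> \<in> F" for \<sigma>
    using chain[of \<sigma> \<sigma>0] M0(3) \<sigma>0 that by blast
  define s where "s = sig m \<sigma>0"
  have ss: "strategy E own a v1 s" using \<sigma>0 by (simp add: F_def s_def)
  have gam: "gamma E own prec a h s = Gamma E own prec a h"
  proof
    show "Gamma E own prec a h \<subseteq> gamma E own prec a h s"
      using ss by (auto simp: Gamma_def v1_def)
  next
    show "gamma E own prec a h s \<subseteq> Gamma E own prec a h"
    proof
      fix p assume pg: "p \<in> gamma E own prec a h s"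
      then have ip: "ipath_from E v1 p" by (simp add: gamma_def v1_def)
      have nw: "\<not> wins_threshold E own prec a h p s"
        using pg by (auto simp: gamma_def wins_threshold_def)
      show "p \<in> Gamma E own prec a h"
        unfolding Gamma_def
      proof (rule INT_I)
        fix s' assume s': "s' \<in> {s. strategy E own a (last h) s}"
        show "p \<in> gamma E own prec a h s'"
        proof (rule ccontr)
          assume "p \<notin> gamma E own prec a h s'"
          then have "wins_threshold E own prec a h p s'"
            using s' ip by (auto simp: gamma_def wins_threshold_def v1_def)
          then obtain s'' where w'': "wins_threshold E own prec a h p s''"
            and m'': "memory_size E own a v1 m s''"
            using assms(4) hh ip by (auto simp: v1_def)
          have "strategy E own a v1 s''" using w'' by (simp add: wins_threshold_def v1_def)
          then obtain \<sigma> where \<sigma>: "\<sigma> \<in> F"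
            and ag: "\<forall>h'. fpath_from E v1 h' \<and> own (last h') = a \<longrightarrow> s'' h' = sig m \<sigma> h'"
            using key m'' by blast
          have "wins_threshold E own prec a h p (sig m \<sigma>)"
            using agree_wins[of E h own a s'' "sig m \<sigma>" prec p] ag w'' by (simp add: v1_def)
          then have "p \<in> W \<sigma>" using ip by (simp add: W_def)
          then have "p \<in> W \<sigma>0" using maxW[OF \<sigma>] by blast
          then show False using nw by (simp add: W_def s_def)
        qed
      qed
    qed
  qed
  show "\<exists>s. strategy E own a (last h) s \<and> memory_size E own a (last h) m s
                \<and> gamma E own prec a h s = Gamma E own prec a h"
    using ss memF[OF \<sigma>0(1)] gam by (auto simp: s_def v1_def)
qed

end
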